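(* Let $\mathbf{\hat X}=(\hat x_{f,h})\in[0,1]^{F\times H}$. Let $\alpha$ be a set of edges of the complete bipartite graph between $\{1,\dots,F\}$ and $\{1,\dots,H\}$ forming a simple cycle or a simple path, with $\alpha=M_1\cup M_2$ a decomposition into two disjoint matchings (alternate edges). Let $\epsilon_1=\min\{\min_{(f,h)\in M_1}\hat x_{f,h},\ \min_{(f,h)\in M_2}(1-\hat x_{f,h})\}$, $\epsilon_2=\min\{\min_{(f,h)\in M_2}\hat x_{f,h},\ \min_{(f,h)\in M_1}(1-\hat x_{f,h})\}$, and for $\epsilon\in[-\epsilon_1,\epsilon_2]$ define $\mathbf{X}(\epsilon,\alpha)$ by $x_{f,h}(\epsilon,\alpha)=\hat x_{f,h}+\epsilon$ for $(f,h)\in M_1$, $x_{f,h}(\epsilon,\alpha)=\hat x_{f,h}-\epsilon$ for $(f,h)\in M_2$, and $x_{f,h}(\epsilon,\alpha)=\hat x_{f,h}$ otherwise. Then the function $\epsilon\mapsto g(\mathbf{X}(\epsilon,\alpha))$ is convex on $[-\epsilon_1,\epsilon_2]$, where $$g(\mathbf{X})=\sum_{f=1}^F\sum_{u=1}^U P_f\,\widetilde{\omega}_u\Big[1-\prod_{h\in\mathcal{H}(u),\,h\neq0}(1-x_{f,h})\Big].$$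
   Context: Setting: helpers $\{0,1,\dots,H\}$ (helper $0$ is the base station), users $\{1,\dots,U\}$, files $\{1,\dots,F\}$ with probabilities $P_f\ge0$; $\mathcal{H}(u)$ is the set of helpers connected to user $u$ (always containing $0$); $\widetilde{\omega}_u\ge 0$ are given weights (in the paper $\widetilde{\omega}_u=\omega_{0,u}-\omega_1$, where all helper-user links have per-bit delay $\omega_1$ and the base station link to $u$ has delay $\omega_{0,u}>\omega_1$). A matching is a set of edges no two of which share a vertex. The pairs $(\mathbf{\hat X},\alpha)$ considered are exactly those arising as intermediate values in the pipage rounding procedure (where $\alpha$ is a simple cycle or a simple path between degree-one nodes in the subgraph of edges with fractional $\hat x_{f,h}$). *)

theory Defs
  imports "HOL-Analysis.Analysis"
begin

text \<open>Vertices of the complete bipartite graph between files {1..F} (Inl f)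
and helpers {1..H} (Inr h). An edge is represented as the pair (f,h).\<close>

fun bip_adj :: "nat + nat \<Rightarrow> nat + nat \<Rightarrow> bool" where
  "bip_adj (Inl f) (Inr h) = True"
| "bip_adj (Inr h) (Inl f) = True"
| "bip_adj _ _ = False"

fun bip_edge :: "nat + nat \<Rightarrow> nat + nat \<Rightarrow> nat \<times> nat" where
  "bip_edge (Inl f) (Inr h) = (f, h)"
| "bip_edge (Inr h) (Inl f) = (f, h)"
| "bip_edge _ _ = undefined"

fun valid_vertex :: "nat \<Rightarrow> nat \<Rightarrow> nat + nat \<Rightarrow> bool" where
  "valid_vertex F H (Inl f) = (f \<in> {1..F})"
| "valid_vertex F H (Inr h) = (h \<in> {1..H})"

definition path_edges :: "(nat + nat) list \<Rightarrow> (nat \<times> nat) list" where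
  "path_edges vs = map (\<lambda>i. bip_edge (vs ! i) (vs ! Suc i)) [0..<length vs - 1]"

definition cycle_edges :: "(nat + nat) list \<Rightarrow> (nat \<times> nat) list" where
  "cycle_edges vs = path_edges vs @ [bip_edge (last vs) (hd vs)]"

definition simple_path :: "nat \<Rightarrow> nat \<Rightarrow> (nat + nat) list \<Rightarrow> bool" where
  "simple_path F H vs \<longleftrightarrow> length vs \<ge> 2 \<and> distinct vs \<and> (\<forall>v\<in>set vs. valid_vertex F H v)
     \<and> (\<forall>i. Suc i < length vs \<longrightarrow> bip_adj (vs ! i) (vs ! Suc i))"

text \<open>Simple cycle: distinct vertex sequence of length at least 4 whose last vertex is
adjacent to the first (bipartiteness forces even length).\<close>
definition simple_cycle :: "nat \<Rightarrow> nat \<Rightarrow> (nat + nat) list \<Rightarrow> bool" where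
  "simple_cycle F H vs \<longleftrightarrow> simple_path F H vs \<and> length vs \<ge> 4 \<and> bip_adj (last vs) (hd vs)"

definition alt_cycle_or_path ::
  "nat \<Rightarrow> nat \<Rightarrow> (nat \<times> nat) set \<Rightarrow> (nat \<times> nat) set \<Rightarrow> (nat \<times> nat) set \<Rightarrow> bool" where
  "alt_cycle_or_path F H \<alpha> M1 M2 \<longleftrightarrow> (\<exists>vs es.
      ((simple_path F H vs \<and> es = path_edges vs) \<or> (simple_cycle F H vs \<and> es = cycle_edges vs))
      \<and> \<alpha> = set es
      \<and> M1 = {es ! i | i. i < length es \<and> even i}
      \<and> M2 = {es ! i | i. i < length es \<and> odd i})"

definition eps1 :: "(nat \<Rightarrow> nat \<Rightarrow> real) \<Rightarrow> (nat \<times> nat) set \<Rightarrow> (nat \<times> nat) set \<Rightarrow> real" where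
  "eps1 xh M1 M2 = Min ((\<lambda>(f,h). xh f h) ` M1 \<union> (\<lambda>(f,h). 1 - xh f h) ` M2)"

definition eps2 :: "(nat \<Rightarrow> nat \<Rightarrow> real) \<Rightarrow> (nat \<times> nat) set \<Rightarrow> (nat \<times> nat) set \<Rightarrow> real" where
  "eps2 xh M1 M2 = Min ((\<lambda>(f,h). xh f h) ` M2 \<union> (\<lambda>(f,h). 1 - xh f h) ` M1)"

definition X_eps :: "(nat \<Rightarrow> nat \<Rightarrow> real) \<Rightarrow> (nat \<times> nat) set \<Rightarrow> (nat \<times> nat) set \<Rightarrow> real
    \<Rightarrow> nat \<Rightarrow> nat \<Rightarrow> real" where
  "X_eps xh M1 M2 \<epsilon> f h =
     (if (f,h) \<in> M1 then xh f h + \<epsilon> else if (f,h) \<in> M2 then xh f h - \<epsilon> else xh f h)"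

definition g_obj :: "nat \<Rightarrow> nat \<Rightarrow> (nat \<Rightarrow> real) \<Rightarrow> (nat \<Rightarrow> real) \<Rightarrow> (nat \<Rightarrow> nat set)
    \<Rightarrow> (nat \<Rightarrow> nat \<Rightarrow> real) \<Rightarrow> real" where
  "g_obj F U P w Hc X =
     (\<Sum>f=1..F. \<Sum>u=1..U. P f * w u * (1 - (\<Prod>h\<in>Hc u - {0}. (1 - X f h))))"

end

theory Submission imports Defs begin

definition quadc :: "(real \<Rightarrow> real) \<Rightarrow> bool" where
  "quadc g \<longleftrightarrow> (\<exists>a b c. c \<ge> 0 \<and> (\<forall>e. g e = a + b*e + c*e^2))"

lemma quadc_convex:
  assumes "quadc g" "convex S" shows "convex_on S g"
proof -
  obtain a b c where c: "c \<ge> 0" and g: "\<And>e. g e = a + b*e + c*e^2"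
    using assms unfolding quadc_def by blast
  have "convex_on UNIV g"
  proof (rule convex_onI)
    fix t x y :: real assume t: "0 < t" "t < 1"
    have key: "c*((1-t)*x^2 + t*y^2) - c*((1-t)*x + t*y)^2 = c*(t*(1-t)*(x-y)^2)"
      by (simp add: algebra_simps power2_eq_square)
    have "0 \<le> c * (t*(1-t)*(x-y)^2)" using c t by simp
    moreover have "(1 - t) * g x + t * g y - g ((1 - t) *\<^sub>R x + t *\<^sub>R y)
        = c*((1-t)*x^2 + t*y^2) - c*((1-t)*x + t*y)^2"
      unfolding g by (simp add: algebra_simps power2_eq_square)
    ultimately show "g ((1 - t) *\<^sub>R x + t *\<^sub>R y) \<le> (1 - t) * g x + t * g y"
      using key by linarith
  qed simp
  then show ?thesis using convex_on_subset[OF _ _ assms(2)] by blast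
qed

lemma quadc_add: assumes "quadc f" "quadc g" shows "quadc (\<lambda>e. f e + g e)"
proof -
  obtain a b c where "c \<ge> 0" "\<And>e. f e = a + b*e + c*e^2" using assms(1) unfolding quadc_def by blast
  moreover obtain a' b' c' where "c' \<ge> 0" "\<And>e. g e = a' + b'*e + c'*e^2" using assms(2) unfolding quadc_def by blast
  ultimately show ?thesis unfolding quadc_def
    by (intro exI[of _ "a+a'"] exI[of _ "b+b'"] exI[of _ "c+c'"]) (simp add: algebra_simps)
qed

lemma quadc_scale: assumes "quadc f" "k \<ge> 0" shows "quadc (\<lambda>e. k * f e)"
proof -
  obtain a b c where "c \<ge> 0" "\<And>e. f e = a + b*e + c*e^2" using assms(1) unfolding quadc_def by blast
  then show ?thesis unfolding quadc_def using assms(2)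
    by (intro exI[of _ "k*a"] exI[of _ "k*b"] exI[of _ "k*c"]) (simp add: algebra_simps)
qed

lemma quadc_sum:
  assumes "finite A" "\<And>i. i \<in> A \<Longrightarrow> quadc (g i)"
  shows "quadc (\<lambda>e. \<Sum>i\<in>A. g i e)"
  using assms
proof (induction A rule: finite_induct)
  case empty
  then show ?case unfolding quadc_def by (rule_tac x=0 in exI, rule_tac x=0 in exI, rule_tac x=0 in exI) simp
next
  case (insert x F)
  then show ?case using quadc_add[of "g x" "\<lambda>e. \<Sum>i\<in>F. g i e"] by simp
qed

lemma quadc_prodform:
  assumes "c \<ge> 0" "t1 * t2 \<ge> 0" "\<And>e. g e = 1 - c * (a1 - t1*e) * (a2 + t2*e)"
  shows "quadc g"
  unfolding quadc_def
  apply (rule exI[of _ "1 - c*a1*a2"], rule exI[of _ "- c*(a1*t2 - t1*a2)"], rule exI[of _ "c*t1*t2"])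
  using assms by (simp add: algebra_simps power2_eq_square)

lemma edge_fst: "bip_adj a b \<Longrightarrow> fst (bip_edge a b) = f \<Longrightarrow> a = Inl f \<or> b = Inl f"
  by (cases a; cases b) auto

lemma adj_isl: "bip_adj a b \<Longrightarrow> isl a \<noteq> isl b"
  by (cases a; cases b) auto

lemma alt_parity:
  assumes "\<And>i. Suc i < length vs \<Longrightarrow> bip_adj (vs ! i) (vs ! Suc i)" "k < length vs"
  shows "isl (vs ! k) = (isl (vs ! 0) = even k)"
  using assms(2)
proof (induction k)
  case 0 then show ?case by simp
next
  case (Suc k)
  then have "isl (vs ! k) \<noteq> isl (vs ! Suc k)" using assms(1) adj_isl by blast
  with Suc show ?case by auto
qed

lemma key_idx:
  assumes dist: "distinct vs" and n: "n = length vs" and L: "L \<le> n" "L < n \<or> even n"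
    and edges: "\<And>i. i < L \<Longrightarrow> es ! i = bip_edge (vs ! i) (vs ! ((i+1) mod n))
                      \<and> bip_adj (vs ! i) (vs ! ((i+1) mod n))"
    and ij: "i < L" "j < L" "even i = even j" "fst (es ! i) = f" "fst (es ! j) = f"
  shows "i = j"
proof -
  have m: "\<And>k. k < n \<Longrightarrow> (k+1) mod n = (if k+1 < n then k+1 else 0)"
  proof -
    fix k assume "k < n"
    then have "k+1 < n \<or> k+1 = n" by linarith
    then show "(k+1) mod n = (if k+1 < n then k+1 else 0)" by auto
  qed
  have ei: "vs ! i = Inl f \<or> vs ! ((i+1) mod n) = Inl f" using edges[OF ij(1)] ij(4) edge_fst by metis
  have ej: "vs ! j = Inl f \<or> vs ! ((j+1) mod n) = Inl f" using edges[OF ij(2)] ij(5) edge_fst by metis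
  have lt: "i < n" "j < n" "(i+1) mod n < n" "(j+1) mod n < n" using ij L by auto
  have eq: "\<And>a b. a < n \<Longrightarrow> b < n \<Longrightarrow> vs ! a = vs ! b \<Longrightarrow> a = b"
    using dist n nth_eq_iff_index_eq by blast
  define a where "a = (i+1) mod n"
  define b where "b = (j+1) mod n"
  have ca: "(i+1<n \<and> a = i+1) \<or> (i+1 = n \<and> a = 0)" proof (cases "i+1<n")
    case False then have "i+1 = n" using lt(1) by linarith
    then show ?thesis unfolding a_def by simp
  qed (simp add: a_def)
  have cb: "(j+1<n \<and> b = j+1) \<or> (j+1 = n \<and> b = 0)" proof (cases "j+1<n")
    case False then have "j+1 = n" using lt(2) by linarith
    then show ?thesis unfolding b_def by simp
  qed (simp add: b_def)
  from ei ej have "i = j \<or> i = b \<or> a = j \<or> a = b"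
    using eq lt unfolding a_def b_def by metis
  then show ?thesis proof (elim disjE)
  qed (use ca cb ij(3) L lt(1,2) ij(1,2) in \<open>(elim disjE conjE; simp; presburger)+\<close>)
qed

lemma path_edges_len: "length (path_edges vs) = length vs - 1"
  unfolding path_edges_def by simp

lemma path_edges_nth: "i < length vs - 1 \<Longrightarrow> path_edges vs ! i = bip_edge (vs ! i) (vs ! Suc i)"
  unfolding path_edges_def by simp

lemma struct_es:
  assumes "(simple_path F H vs \<and> es = path_edges vs) \<or> (simple_cycle F H vs \<and> es = cycle_edges vs)"
  shows "distinct vs \<and> length es \<le> length vs \<and> (length es < length vs \<or> even (length vs))
    \<and> (\<forall>i < length es. es ! i = bip_edge (vs ! i) (vs ! ((i+1) mod length vs))
                      \<and> bip_adj (vs ! i) (vs ! ((i+1) mod length vs)))"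
proof -
  have sp: "simple_path F H vs" using assms unfolding simple_cycle_def by auto
  then have d: "distinct vs" and l2: "length vs \<ge> 2"
    and adj: "\<And>i. Suc i < length vs \<Longrightarrow> bip_adj (vs ! i) (vs ! Suc i)"
    unfolding simple_path_def by auto
  have pe: "\<forall>i < length vs - 1. path_edges vs ! i = bip_edge (vs ! i) (vs ! ((i+1) mod length vs))
                      \<and> bip_adj (vs ! i) (vs ! ((i+1) mod length vs))"
    using path_edges_nth adj by auto
  from assms show ?thesis
  proof
    assume "simple_path F H vs \<and> es = path_edges vs"
    then show ?thesis using d l2 pe path_edges_len by auto
  next
    assume c: "simple_cycle F H vs \<and> es = cycle_edges vs"
    then have la: "bip_adj (last vs) (hd vs)" unfolding simple_cycle_def by auto
    have ne: "vs \<noteq> []" using l2 by auto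
    have lv: "last vs = vs ! (length vs - 1)" "hd vs = vs ! 0"
      using ne by (simp_all add: last_conv_nth hd_conv_nth)
    have "isl (vs ! (length vs - 1)) = (isl (vs ! 0) = even (length vs - 1))"
      using alt_parity[OF adj] l2 by auto
    moreover have "isl (vs ! (length vs - 1)) \<noteq> isl (vs ! 0)" using adj_isl la lv by metis
    ultimately have ev: "even (length vs)" using l2 by auto
    have les: "length es = length vs" using c l2 unfolding cycle_edges_def by (simp add: path_edges_len)
    have "\<forall>i < length es. es ! i = bip_edge (vs ! i) (vs ! ((i+1) mod length vs))
                      \<and> bip_adj (vs ! i) (vs ! ((i+1) mod length vs))"
    proof (intro allI impI)
      fix i assume i: "i < length es"
      show "es ! i = bip_edge (vs ! i) (vs ! ((i+1) mod length vs))
                      \<and> bip_adj (vs ! i) (vs ! ((i+1) mod length vs))"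
      proof (cases "i < length vs - 1")
        case True then show ?thesis using pe c unfolding cycle_edges_def
          by (simp add: nth_append path_edges_len)
      next
        case False then have "i = length vs - 1" using i les by linarith
        moreover have "(length vs - 1 + 1) mod length vs = 0"
        proof -
          have "length vs - 1 + 1 = length vs" using l2 by linarith
          then show ?thesis by simp
        qed
        ultimately show ?thesis using c la lv unfolding cycle_edges_def
          by (simp add: nth_append path_edges_len)
      qed
    qed
    then show ?thesis using d les ev by auto
  qed
qed

lemma match_fst_gen:
  assumes "alt_cycle_or_path F H \<alpha> M1 M2"
  shows "\<exists>vs es. distinct vs \<and> length es \<le> length vs \<and> (length es < length vs \<or> even (length vs))
    \<and> (\<forall>i < length es. es ! i = bip_edge (vs ! i) (vs ! ((i+1) mod length vs))
                      \<and> bip_adj (vs ! i) (vs ! ((i+1) mod length vs)))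
    \<and> M1 = {es ! i | i. i < length es \<and> even i} \<and> M2 = {es ! i | i. i < length es \<and> odd i}"
proof -
  obtain vs es where h: "(simple_path F H vs \<and> es = path_edges vs) \<or> (simple_cycle F H vs \<and> es = cycle_edges vs)"
    and m: "M1 = {es ! i | i. i < length es \<and> even i}" "M2 = {es ! i | i. i < length es \<and> odd i}"
    using assms unfolding alt_cycle_or_path_def by blast
  show ?thesis
    by (rule exI[of _ vs], rule exI[of _ es]) (use struct_es[OF h] m in simp)
qed

lemma match_M:
  assumes "alt_cycle_or_path F H \<alpha> M1 M2"
  shows "(f,h) \<in> M1 \<Longrightarrow> (f,h') \<in> M1 \<Longrightarrow> h = h'"
    and "(f,h) \<in> M2 \<Longrightarrow> (f,h') \<in> M2 \<Longrightarrow> h = h'"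
proof -
  obtain vs es where d: "distinct vs" and L: "length es \<le> length vs" "(length es < length vs \<or> even (length vs))"
    and e: "\<And>i. i < length es \<Longrightarrow> es ! i = bip_edge (vs ! i) (vs ! ((i+1) mod length vs))
                      \<and> bip_adj (vs ! i) (vs ! ((i+1) mod length vs))"
    and m: "M1 = {es ! i | i. i < length es \<and> even i}" "M2 = {es ! i | i. i < length es \<and> odd i}"
    using match_fst_gen[OF assms] by blast
  have K: "\<And>i j. i < length es \<Longrightarrow> j < length es \<Longrightarrow> even i = even j \<Longrightarrow> fst (es ! i) = f
      \<Longrightarrow> fst (es ! j) = f \<Longrightarrow> i = j"
    using key_idx[OF d refl L e] by blast
  show "(f,h) \<in> M1 \<Longrightarrow> (f,h') \<in> M1 \<Longrightarrow> h = h'"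
  proof -
    assume "(f,h) \<in> M1" "(f,h') \<in> M1"
    then obtain i j where "(f,h) = es ! i" "i < length es" "even i" "(f,h') = es ! j" "j < length es" "even j"
      using m by auto
    then show "h = h'" using K[of i j] by (metis fst_conv snd_conv)
  qed
  show "(f,h) \<in> M2 \<Longrightarrow> (f,h') \<in> M2 \<Longrightarrow> h = h'"
  proof -
    assume "(f,h) \<in> M2" "(f,h') \<in> M2"
    then obtain i j where "(f,h) = es ! i" "i < length es" "odd i" "(f,h') = es ! j" "j < length es" "odd j"
      using m by auto
    then show "h = h'" using K[of i j] by (metis fst_conv snd_conv)
  qed
qed

lemma prod_quadc:
  assumes U1: "\<And>h h'. (f,h) \<in> M1 \<Longrightarrow> (f,h') \<in> M1 \<Longrightarrow> h = h'"
    and U2: "\<And>h h'. (f,h) \<in> M2 \<Longrightarrow> (f,h') \<in> M2 \<Longrightarrow> h = h'"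
    and fin: "finite S" and nn: "\<And>h. h \<in> S \<Longrightarrow> 0 \<le> 1 - xh f h"
  shows "quadc (\<lambda>e. 1 - (\<Prod>h\<in>S. (1 - X_eps xh M1 M2 e f h)))"
proof -
  define T1 where "T1 = {h\<in>S. (f,h)\<in>M1}"
  define T2 where "T2 = {h\<in>S. (f,h)\<notin>M1 \<and> (f,h)\<in>M2}"
  define T0 where "T0 = {h\<in>S. (f,h)\<notin>M1 \<and> (f,h)\<notin>M2}"
  have S: "S = T0 \<union> (T1 \<union> T2)" unfolding T0_def T1_def T2_def by auto
  have fins: "finite T0" "finite T1" "finite T2" using fin unfolding T0_def T1_def T2_def by auto
  have split: "\<And>e. (\<Prod>h\<in>S. (1 - X_eps xh M1 M2 e f h)) =
     (\<Prod>h\<in>T0. (1 - X_eps xh M1 M2 e f h)) * ((\<Prod>h\<in>T1. (1 - X_eps xh M1 M2 e f h))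
       * (\<Prod>h\<in>T2. (1 - X_eps xh M1 M2 e f h)))"
  proof -
    fix e
    have "(\<Prod>h\<in>T0 \<union> (T1 \<union> T2). (1 - X_eps xh M1 M2 e f h)) =
     (\<Prod>h\<in>T0. (1 - X_eps xh M1 M2 e f h)) * (\<Prod>h\<in>T1 \<union> T2. (1 - X_eps xh M1 M2 e f h))"
      by (rule prod.union_disjoint) (use fins in \<open>auto simp: T0_def T1_def T2_def\<close>)
    also have "(\<Prod>h\<in>T1 \<union> T2. (1 - X_eps xh M1 M2 e f h)) = (\<Prod>h\<in>T1. (1 - X_eps xh M1 M2 e f h))
       * (\<Prod>h\<in>T2. (1 - X_eps xh M1 M2 e f h))"
      by (rule prod.union_disjoint) (use fins in \<open>auto simp: T0_def T1_def T2_def\<close>)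
    finally show "?thesis e" using S by simp
  qed
  define c where "c = (\<Prod>h\<in>T0. (1 - xh f h))"
  have c0: "\<And>e. (\<Prod>h\<in>T0. (1 - X_eps xh M1 M2 e f h)) = c"
    unfolding c_def by (rule prod.cong) (auto simp: T0_def X_eps_def)
  have cnn: "c \<ge> 0" unfolding c_def by (rule prod_nonneg) (use nn in \<open>auto simp: T0_def\<close>)
  obtain a1 t1 where t1: "t1 \<in> {0,1}" and p1: "\<And>e. (\<Prod>h\<in>T1. (1 - X_eps xh M1 M2 e f h)) = a1 - t1*e"
  proof (cases "T1 = {}")
    case True then show ?thesis using that[of 0 1] by simp
  next
    case False
    then obtain h1 where h1: "h1 \<in> T1" by auto
    then have "T1 = {h1}" using U1 unfolding T1_def by auto
    moreover have "(f,h1) \<in> M1" using h1 unfolding T1_def by auto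
    ultimately show ?thesis using that[of 1 "1 - xh f h1"] by (simp add: X_eps_def)
  qed
  obtain a2 t2 where t2: "t2 \<in> {0,1}" and p2: "\<And>e. (\<Prod>h\<in>T2. (1 - X_eps xh M1 M2 e f h)) = a2 + t2*e"
  proof (cases "T2 = {}")
    case True then show ?thesis using that[of 0 1] by simp
  next
    case False
    then obtain h2 where h2: "h2 \<in> T2" by auto
    then have "T2 = {h2}" using U2 unfolding T2_def by auto
    moreover have "(f,h2) \<notin> M1" "(f,h2) \<in> M2" using h2 unfolding T2_def by auto
    ultimately show ?thesis using that[of 1 "1 - xh f h2"] by (simp add: X_eps_def)
  qed
  show ?thesis
    by (rule quadc_prodform[of c t1 t2 _ a1 a2])
       (use cnn t1 t2 in \<open>auto simp: split c0 p1 p2 mult.assoc\<close>)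
qed

theorem mainTheorem5:
  fixes F H U :: nat
    and P w :: "nat \<Rightarrow> real"
    and Hc :: "nat \<Rightarrow> nat set"
    and xh :: "nat \<Rightarrow> nat \<Rightarrow> real"
    and \<alpha> M1 M2 :: "(nat \<times> nat) set"
  assumes P_nonneg: "\<And>f. f \<in> {1..F} \<Longrightarrow> P f \<ge> 0"
    and w_nonneg: "\<And>u. u \<in> {1..U} \<Longrightarrow> w u \<ge> 0"
    and Hc_sub: "\<And>u. u \<in> {1..U} \<Longrightarrow> Hc u \<subseteq> {0..H}"
    and Hc_0: "\<And>u. u \<in> {1..U} \<Longrightarrow> 0 \<in> Hc u"
    and xh_range: "\<And>f h. f \<in> {1..F} \<Longrightarrow> h \<in> {1..H} \<Longrightarrow> xh f h \<in> {0..1}"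
    and alpha: "alt_cycle_or_path F H \<alpha> M1 M2"
  shows "convex_on {- eps1 xh M1 M2 .. eps2 xh M1 M2}
           (\<lambda>\<epsilon>. g_obj F U P w Hc (X_eps xh M1 M2 \<epsilon>))"
proof -
  note U1 = match_M(1)[OF alpha] and U2 = match_M(2)[OF alpha]
  have "quadc (\<lambda>\<epsilon>. g_obj F U P w Hc (X_eps xh M1 M2 \<epsilon>))"
    unfolding g_obj_def
  proof (rule quadc_sum)
    fix f assume f: "f \<in> {1..F}"
    show "quadc (\<lambda>e. \<Sum>u=1..U. P f * w u * (1 - (\<Prod>h\<in>Hc u - {0}. (1 - X_eps xh M1 M2 e f h))))"
    proof (rule quadc_sum)
      fix u assume u: "u \<in> {1..U}"
      have sub: "Hc u - {0} \<subseteq> {1..H}" using Hc_sub[OF u] by auto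
      have "quadc (\<lambda>e. 1 - (\<Prod>h\<in>Hc u - {0}. (1 - X_eps xh M1 M2 e f h)))"
      proof (rule prod_quadc)
        show "finite (Hc u - {0})" using sub finite_subset by blast
        fix h assume "h \<in> Hc u - {0}"
        then have "xh f h \<in> {0..1}" using sub xh_range[OF f] by auto
        then show "0 \<le> 1 - xh f h" by auto
      qed (use U1 U2 in blast)+
      moreover have "P f * w u \<ge> 0" using P_nonneg[OF f] w_nonneg[OF u] by simp
      ultimately show "quadc (\<lambda>e. P f * w u * (1 - (\<Prod>h\<in>Hc u - {0}. (1 - X_eps xh M1 M2 e f h))))"
        using quadc_scale by blast
    qed simp
  qed simp
  then show ?thesis by (rule quadc_convex) (simp add: convex_real_interval)
qed

end
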